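(* Let $\mathcal{S}=\{(x_i,y_i)\}_{i=1}^N$ be a training set, $K$ a continuous, real-valued, symmetric, shift-invariant positive definite kernel on $\mathbb{R}^d$ with RKHS $\mathcal{H}$ and spectral probability measure $\mathbb{P}(\omega)$, $\lambda>0$, $L(u,y)$ a loss convex in $u$ with $|L'(u,y)|<M$ (derivative in the first argument), $L$ and $L'$ $\mathcal{L}$-Lipschitz in the first argument, $K(x,x')\le\kappa$ for all $x,x'$, and $|\phi_\omega(x)\phi_\omega(x')|\le\phi$ for all $\omega,b,x,x'$. Let $f_t,h_t$ be the sequences defined in the context with constant step size $\gamma$ satisfying $\frac{1}{\lambda}>\gamma>0$. Then for any $x$, $$\mathbb{E}\big[|f_{t+1}(x)-h_{t+1}(x)|^2\big]\le C^2,\qquad C^2:=M^2(\sqrt{\kappa}+\sqrt{\phi})^2\gamma/\lambda.$$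
   Context: Random feature map: $\phi_\omega(x)=\sqrt{2}\cos(\omega^Tx+b)$ with $\omega\sim\mathbb{P}(\omega)$, $b\sim U[0,2\pi]$, so that $K(x,x')=\mathbb{E}_{\omega,b}[\phi_\omega(x)\phi_\omega(x')]$. Iterations: $f_1=h_1=0$; at iteration $t$ draw $(x_t,y_t)$ uniformly from $\mathcal{S}$ and $(\omega_t,b_t)$ independently, and set $f_{t+1}=f_t-\gamma\big(L'(f_t(x_t),y_t)\phi_{\omega_t}(x_t)\phi_{\omega_t}(\cdot)+\lambda f_t\big)$ and $h_{t+1}=h_t-\gamma\big(L'(f_t(x_t),y_t)K(x_t,\cdot)+\lambda h_t\big)$. The expectation is over all sampled data points and random features up to iteration $t$. *)

theory Defs
  imports "HOL-Probability.Probability"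
begin

definition rff :: "'a::euclidean_space \<Rightarrow> real \<Rightarrow> 'a \<Rightarrow> real" where
  "rff \<omega> b x = sqrt 2 * cos (\<omega> \<bullet> x + b)"

definition draw_measure :: "nat \<Rightarrow> 'a::euclidean_space measure \<Rightarrow> (nat \<times> 'a \<times> real) measure" where
  "draw_measure N P = measure_pmf (pmf_of_set {..<N}) \<Otimes>\<^sub>M (P \<Otimes>\<^sub>M uniform_measure lborel {0..2*pi})"

text \<open>Index shift: f_iter ... s t is the paper's f_(t+1),
  so f_iter ... s 0 = f_1 = 0.  The draw used at paper's iteration t+1 is s t.
  Ld is the derivative L' of the loss in its first argument.\<close>
fun f_iter :: "(real \<Rightarrow> real \<Rightarrow> real) \<Rightarrow> (nat \<Rightarrow> 'a::euclidean_space) \<Rightarrow> (nat \<Rightarrow> real)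
    \<Rightarrow> real \<Rightarrow> real \<Rightarrow> (nat \<Rightarrow> nat \<times> 'a \<times> real) \<Rightarrow> nat \<Rightarrow> 'a \<Rightarrow> real" where
  "f_iter Ld xs ys \<gamma> lam s 0 = (\<lambda>z. 0)"
| "f_iter Ld xs ys \<gamma> lam s (Suc t) =
     (let (i, \<omega>, b) = s t; ft = f_iter Ld xs ys \<gamma> lam s t in
      (\<lambda>z. ft z - \<gamma> * (Ld (ft (xs i)) (ys i) * rff \<omega> b (xs i) * rff \<omega> b z + lam * ft z)))"

fun h_iter :: "(real \<Rightarrow> real \<Rightarrow> real) \<Rightarrow> ('a::euclidean_space \<Rightarrow> 'a \<Rightarrow> real) \<Rightarrow> (nat \<Rightarrow> 'a) \<Rightarrow> (nat \<Rightarrow> real)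
    \<Rightarrow> real \<Rightarrow> real \<Rightarrow> (nat \<Rightarrow> nat \<times> 'a \<times> real) \<Rightarrow> nat \<Rightarrow> 'a \<Rightarrow> real" where
  "h_iter Ld K xs ys \<gamma> lam s 0 = (\<lambda>z. 0)"
| "h_iter Ld K xs ys \<gamma> lam s (Suc t) =
     (let (i, \<omega>, b) = s t; ft = f_iter Ld xs ys \<gamma> lam s t; ht = h_iter Ld K xs ys \<gamma> lam s t in
      (\<lambda>z. ht z - \<gamma> * (Ld (ft (xs i)) (ys i) * K (xs i) z + lam * ht z)))"

end

theory Submission
  imports Defs
begin


abbreviation "U \<equiv> uniform_measure lborel {0..2*pi}"

lemma prob_U: "prob_space U"
  by (rule prob_space_uniform_measure) auto

lemma prob_D: "prob_space P \<Longrightarrow> prob_space (draw_measure N P)"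
  unfolding draw_measure_def
  by (intro prob_space_pair prob_U prob_space_measure_pmf)

lemma f_iter_Suc_alt:
  "f_iter Ld xs ys \<gamma> lam s (Suc t) z =
    (\<lambda>i s. f_iter Ld xs ys \<gamma> lam s t z - \<gamma> * (Ld (f_iter Ld xs ys \<gamma> lam s t (xs i)) (ys i)
       * rff (fst (snd (s t))) (snd (snd (s t))) (xs i) * rff (fst (snd (s t))) (snd (snd (s t))) z
       + lam * f_iter Ld xs ys \<gamma> lam s t z)) (fst (s t)) s"
  by (simp add: split_beta Let_def)

lemma h_iter_Suc_alt:
  "h_iter Ld K xs ys \<gamma> lam s (Suc t) z =
    (\<lambda>i s. h_iter Ld K xs ys \<gamma> lam s t z - \<gamma> * (Ld (f_iter Ld xs ys \<gamma> lam s t (xs i)) (ys i)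
       * K (xs i) z + lam * h_iter Ld K xs ys \<gamma> lam s t z)) (fst (s t)) s"
  by (simp add: split_beta Let_def)

lemma meas_fst_draw[measurable]:
  assumes "t \<in> I"
  shows "(\<lambda>s. fst (s t)) \<in> measurable (PiM I (\<lambda>_. draw_measure N P)) (count_space UNIV)"
proof -
  have "(\<lambda>s. s t) \<in> measurable (PiM I (\<lambda>_. draw_measure N P)) (draw_measure N P)"
    using assms by measurable
  moreover have "fst \<in> measurable (draw_measure N P) (count_space UNIV)"
    unfolding draw_measure_def
    using measurable_fst[of "measure_pmf (pmf_of_set {..<N})" "P \<Otimes>\<^sub>M U"] by simp
  ultimately show ?thesis by (rule measurable_compose[where f="\<lambda>s. s t"])
qed

lemma meas_rff:
  assumes "sets P = sets borel" "t \<in> I"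
  shows "(\<lambda>s. rff (fst (snd (s t))) (snd (snd (s t))) y) \<in> borel_measurable (PiM I (\<lambda>_. draw_measure N P))"
proof -
  have "(\<lambda>s. s t) \<in> measurable (PiM I (\<lambda>_. draw_measure N P)) (draw_measure N P)"
    using assms by measurable
  moreover have "(\<lambda>d. rff (fst (snd d)) (snd (snd d)) y) \<in> borel_measurable (draw_measure N P)"
    unfolding draw_measure_def rff_def using assms(1) by measurable
  ultimately show ?thesis by (rule measurable_compose[where f="\<lambda>s. s t"])
qed

lemma meas_iter:
  assumes P: "sets P = sets borel" and Ld: "\<And>y. continuous_on UNIV (\<lambda>u. Ld u y)"
  shows "t \<le> T \<Longrightarrow> (\<lambda>s. f_iter Ld xs ys \<gamma> lam s t z) \<in> borel_measurable (PiM {..<T} (\<lambda>_. draw_measure N P))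
     \<and> (\<lambda>s. h_iter Ld K xs ys \<gamma> lam s t z) \<in> borel_measurable (PiM {..<T} (\<lambda>_. draw_measure N P))"
proof (induction t arbitrary: z)
  case 0
  then show ?case by simp
next
  case (Suc t)
  have tT: "t \<in> {..<T}" using Suc.prems by simp
  have Ldm: "\<And>g c. g \<in> borel_measurable M \<Longrightarrow> (\<lambda>x. Ld (g x) c) \<in> borel_measurable M" for M
    by (rule measurable_compose[OF _ borel_measurable_continuous_onI[OF Ld]]) simp
  have IH: "\<And>z. (\<lambda>s. f_iter Ld xs ys \<gamma> lam s t z) \<in> borel_measurable (PiM {..<T} (\<lambda>_. draw_measure N P))"
     "\<And>z. (\<lambda>s. h_iter Ld K xs ys \<gamma> lam s t z) \<in> borel_measurable (PiM {..<T} (\<lambda>_. draw_measure N P))"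
    using Suc by auto
    have "(\<lambda>s. f_iter Ld xs ys \<gamma> lam s (Suc t) z) \<in> borel_measurable (PiM {..<T} (\<lambda>_. draw_measure N P))"
    unfolding f_iter_Suc_alt
    apply (rule measurable_compose_countable[where g="\<lambda>s. fst (s t)" and f="\<lambda>i s. f_iter Ld xs ys \<gamma> lam s t z - \<gamma> * (Ld (f_iter Ld xs ys \<gamma> lam s t (xs i)) (ys i)
       * rff (fst (snd (s t))) (snd (snd (s t))) (xs i) * rff (fst (snd (s t))) (snd (snd (s t))) z
       + lam * f_iter Ld xs ys \<gamma> lam s t z)"])
    subgoal for i
      by (intro borel_measurable_diff borel_measurable_times borel_measurable_add borel_measurable_const
        Ldm IH meas_rff[OF P tT])
    by (rule meas_fst_draw[OF tT])
  moreover have "(\<lambda>s. h_iter Ld K xs ys \<gamma> lam s (Suc t) z) \<in> borel_measurable (PiM {..<T} (\<lambda>_. draw_measure N P))"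
    unfolding h_iter_Suc_alt
    apply (rule measurable_compose_countable[where g="\<lambda>s. fst (s t)" and f="\<lambda>i s. h_iter Ld K xs ys \<gamma> lam s t z - \<gamma> * (Ld (f_iter Ld xs ys \<gamma> lam s t (xs i)) (ys i)
       * K (xs i) z + lam * h_iter Ld K xs ys \<gamma> lam s t z)"])
    subgoal for i
      by (intro borel_measurable_diff borel_measurable_times borel_measurable_add borel_measurable_const
        Ldm IH)
    by (rule meas_fst_draw[OF tT])
  ultimately show ?case by blast
qed



lemma rff_sq_le: "(rff w b y)\<^sup>2 \<le> 2"
proof -
  have "(cos (w \<bullet> y + b))\<^sup>2 \<le> 1" using abs_cos_le_one[of "w \<bullet> y + b"] by (simp add: abs_square_le_1)
  then show ?thesis unfolding rff_def by (simp add: power_mult_distrib)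
qed

lemma rff_meas_pair[measurable]:
  assumes "sets P = sets borel"
  shows "(\<lambda>w. rff (fst w) (snd w) y) \<in> borel_measurable (P \<Otimes>\<^sub>M U)"
  unfolding rff_def using assms by measurable

lemma spectral_pair:
  assumes P: "prob_space P" "sets P = sets borel"
    and Ks: "K y z = (\<integral>\<omega>. (\<integral>b. rff \<omega> b y * rff \<omega> b z \<partial>U) \<partial>P)"
  shows "integrable (P \<Otimes>\<^sub>M U) (\<lambda>w. rff (fst w) (snd w) y * rff (fst w) (snd w) z)"
    "(\<integral>w. rff (fst w) (snd w) y * rff (fst w) (snd w) z \<partial>(P \<Otimes>\<^sub>M U)) = K y z"
proof -
  interpret Q: prob_space "P \<Otimes>\<^sub>M U" by (intro prob_space_pair P prob_U)
  interpret PS: pair_sigma_finite P U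
    by (intro pair_sigma_finite.intro prob_space_imp_sigma_finite P prob_U)
  show I: "integrable (P \<Otimes>\<^sub>M U) (\<lambda>w. rff (fst w) (snd w) y * rff (fst w) (snd w) z)"
  proof (rule Q.integrable_const_bound[where B=2])
    show "AE w in P \<Otimes>\<^sub>M U. norm (rff (fst w) (snd w) y * rff (fst w) (snd w) z) \<le> 2"
    proof (intro AE_I2)
      fix w
      have "(rff (fst w) (snd w) y * rff (fst w) (snd w) z)\<^sup>2 \<le> 2 * 2"
        unfolding power_mult_distrib by (intro mult_mono rff_sq_le) auto
      then show "norm (rff (fst w) (snd w) y * rff (fst w) (snd w) z) \<le> 2"
        by (metis abs_le_square_iff real_norm_def abs_of_nonneg zero_le_numeral power2_eq_square mult_2 numeral_Bit0 numeral_One mult_2_right)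
    qed
  qed (use P in measurable)
  show "(\<integral>w. rff (fst w) (snd w) y * rff (fst w) (snd w) z \<partial>(P \<Otimes>\<^sub>M U)) = K y z"
    using PS.integral_fst'[OF I] Ks by simp
qed



lemma inner_step:
  assumes P: "prob_space P" "sets P = sets borel"
    and Ks: "\<And>y z. K y z = (\<integral>\<omega>. (\<integral>b. rff \<omega> b y * rff \<omega> b z \<partial>U) \<partial>P)"
    and kap: "\<And>y. K y y \<le> \<kappa>"
  shows "(\<integral>\<^sup>+ w. ennreal ((a - \<beta> * (rff (fst w) (snd w) y * rff (fst w) (snd w) z - K y z))\<^sup>2) \<partial>(P \<Otimes>\<^sub>M U))
      \<le> ennreal (a\<^sup>2 + \<beta>\<^sup>2 * min 4 (2 * \<kappa>))"
proof -
  interpret Q: prob_space "P \<Otimes>\<^sub>M U" by (intro prob_space_pair P prob_U)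
  define p where "p w = rff (fst w) (snd w) y * rff (fst w) (snd w) z" for w
  define q where "q w = rff (fst w) (snd w) y * rff (fst w) (snd w) y" for w
  have Ip: "integrable (P \<Otimes>\<^sub>M U) p" and Ep: "(\<integral>w. p w \<partial>(P \<Otimes>\<^sub>M U)) = K y z"
    using spectral_pair[where y=y and z=z and K=K, OF P Ks] unfolding p_def by auto
  have Iq: "integrable (P \<Otimes>\<^sub>M U) q" and Eq: "(\<integral>w. q w \<partial>(P \<Otimes>\<^sub>M U)) = K y y"
    using spectral_pair[where y=y and z=y and K=K, OF P Ks] unfolding q_def by auto
  have pm[measurable]: "p \<in> borel_measurable (P \<Otimes>\<^sub>M U)"
    using Ip by auto
  have p2_4: "(p w)\<^sup>2 \<le> 4" for w
  proof -
    have "(rff (fst w) (snd w) y)\<^sup>2 * (rff (fst w) (snd w) z)\<^sup>2 \<le> 2 * 2"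
      by (intro mult_mono rff_sq_le) auto
    then show ?thesis unfolding p_def power_mult_distrib by simp
  qed
  have p2_q: "(p w)\<^sup>2 \<le> 2 * q w" for w
  proof -
    have "(rff (fst w) (snd w) y)\<^sup>2 * (rff (fst w) (snd w) z)\<^sup>2 \<le> (rff (fst w) (snd w) y)\<^sup>2 * 2"
      by (intro mult_left_mono rff_sq_le) auto
    then show ?thesis unfolding p_def q_def power_mult_distrib by (simp add: power2_eq_square)
  qed
  have Ip2: "integrable (P \<Otimes>\<^sub>M U) (\<lambda>w. (p w)\<^sup>2)"
    by (rule Q.integrable_const_bound[where B=4]) (use p2_4 in auto)
  have Ep2: "(\<integral>w. (p w)\<^sup>2 \<partial>(P \<Otimes>\<^sub>M U)) \<le> min 4 (2 * \<kappa>)"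
  proof -
    have "(\<integral>w. (p w)\<^sup>2 \<partial>(P \<Otimes>\<^sub>M U)) \<le> (\<integral>w. 4 \<partial>(P \<Otimes>\<^sub>M U))"
      by (intro integral_mono Ip2 p2_4) auto
    moreover have "(\<integral>w. (p w)\<^sup>2 \<partial>(P \<Otimes>\<^sub>M U)) \<le> (\<integral>w. 2 * q w \<partial>(P \<Otimes>\<^sub>M U))"
      by (intro integral_mono Ip2 p2_q) (use Iq in auto)
    ultimately show ?thesis using Eq kap[of y] by (simp add: Q.prob_space)
  qed
  define k where "k = K y z"
  have eq: "(a - \<beta> * (p w - k))\<^sup>2 = (a + \<beta> * k)\<^sup>2 - 2 * (a + \<beta> * k) * \<beta> * p w + \<beta>\<^sup>2 * (p w)\<^sup>2" for w
    by (simp add: power2_eq_square algebra_simps)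
  have Ieq: "integrable (P \<Otimes>\<^sub>M U) (\<lambda>w. (a + \<beta> * k)\<^sup>2 - 2 * (a + \<beta> * k) * \<beta> * p w + \<beta>\<^sup>2 * (p w)\<^sup>2)"
    using Ip Ip2 by auto
  have "(\<integral>\<^sup>+ w. ennreal ((a - \<beta> * (p w - k))\<^sup>2) \<partial>(P \<Otimes>\<^sub>M U))
      = ennreal (\<integral>w. (a - \<beta> * (p w - k))\<^sup>2 \<partial>(P \<Otimes>\<^sub>M U))"
    unfolding eq by (rule nn_integral_eq_integral[OF Ieq]) (rule AE_I2, simp only: eq[symmetric] zero_le_power2)
  also have "(\<integral>w. (a - \<beta> * (p w - k))\<^sup>2 \<partial>(P \<Otimes>\<^sub>M U))
      = (a + \<beta> * k)\<^sup>2 - 2 * (a + \<beta> * k) * \<beta> * k + \<beta>\<^sup>2 * (\<integral>w. (p w)\<^sup>2 \<partial>(P \<Otimes>\<^sub>M U))"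
    unfolding eq using Ip Ip2 Ep unfolding k_def by (simp add: Q.prob_space)
  also have "\<dots> = a\<^sup>2 - \<beta>\<^sup>2 * k\<^sup>2 + \<beta>\<^sup>2 * (\<integral>w. (p w)\<^sup>2 \<partial>(P \<Otimes>\<^sub>M U))"
    by (simp add: power2_eq_square algebra_simps)
  also have "\<dots> \<le> a\<^sup>2 + \<beta>\<^sup>2 * min 4 (2 * \<kappa>)"
  proof -
    have "\<beta>\<^sup>2 * (\<integral>w. (p w)\<^sup>2 \<partial>(P \<Otimes>\<^sub>M U)) \<le> \<beta>\<^sup>2 * min 4 (2 * \<kappa>)"
      by (intro mult_left_mono Ep2) auto
    moreover have "0 \<le> \<beta>\<^sup>2 * k\<^sup>2" by simp
    ultimately show ?thesis by linarith
  qed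
  finally show ?thesis unfolding p_def k_def by (simp add: ennreal_leI)
qed



lemma iter_restrict:
  "(\<forall>i<t. s i = s' i) \<Longrightarrow> f_iter Ld xs ys \<gamma> lam s t = f_iter Ld xs ys \<gamma> lam s' t
     \<and> h_iter Ld K xs ys \<gamma> lam s t = h_iter Ld K xs ys \<gamma> lam s' t"
  by (induction t) (auto simp: Let_def split_beta)

lemma step_identity:
  "f_iter Ld xs ys \<gamma> lam (s(t:=(i,\<omega>,b))) (Suc t) x - h_iter Ld K xs ys \<gamma> lam (s(t:=(i,\<omega>,b))) (Suc t) x
   = (1 - \<gamma> * lam) * (f_iter Ld xs ys \<gamma> lam s t x - h_iter Ld K xs ys \<gamma> lam s t x)
     - \<gamma> * Ld (f_iter Ld xs ys \<gamma> lam s t (xs i)) (ys i) * (rff \<omega> b (xs i) * rff \<omega> b x - K (xs i) x)"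
proof -
  have "f_iter Ld xs ys \<gamma> lam (s(t:=(i,\<omega>,b))) t = f_iter Ld xs ys \<gamma> lam s t
    \<and> h_iter Ld K xs ys \<gamma> lam (s(t:=(i,\<omega>,b))) t = h_iter Ld K xs ys \<gamma> lam s t"
    by (rule iter_restrict) simp
  then have fr: "f_iter Ld xs ys \<gamma> lam (s(t:=(i,\<omega>,b))) t = f_iter Ld xs ys \<gamma> lam s t"
    and hr: "h_iter Ld K xs ys \<gamma> lam (s(t:=(i,\<omega>,b))) t = h_iter Ld K xs ys \<gamma> lam s t" by auto
  show ?thesis by (simp add: fr hr Let_def algebra_simps)
qed



lemma inner_D:
  assumes P: "prob_space P" "sets P = sets borel"
    and Ks: "\<And>y z. K y z = (\<integral>\<omega>. (\<integral>b. rff \<omega> b y * rff \<omega> b z \<partial>U) \<partial>P)"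
    and kap: "\<And>y. K y y \<le> \<kappa>"
    and \<beta>: "\<And>i. (\<beta> i)\<^sup>2 \<le> C"
    and B: "0 \<le> min 4 (2 * \<kappa>)"
  shows "(\<integral>\<^sup>+ d. ennreal ((a - \<beta> (fst d) * (rff (fst (snd d)) (snd (snd d)) (xs (fst d)) * rff (fst (snd d)) (snd (snd d)) x - K (xs (fst d)) x))\<^sup>2) \<partial>(draw_measure N P))
      \<le> ennreal (a\<^sup>2 + C * min 4 (2 * \<kappa>))"
proof -
  interpret Q: prob_space "P \<Otimes>\<^sub>M U" by (intro prob_space_pair P prob_U)
  let ?pm = "measure_pmf (pmf_of_set {..<N})"
  let ?F = "\<lambda>d. ennreal ((a - \<beta> (fst d) * (rff (fst (snd d)) (snd (snd d)) (xs (fst d)) * rff (fst (snd d)) (snd (snd d)) x - K (xs (fst d)) x))\<^sup>2)"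
  have Fm: "?F \<in> borel_measurable (?pm \<Otimes>\<^sub>M (P \<Otimes>\<^sub>M U))"
  proof (rule measurable_compose_countable[where g=fst and f="\<lambda>i d. ennreal ((a - \<beta> i * (rff (fst (snd d)) (snd (snd d)) (xs i) * rff (fst (snd d)) (snd (snd d)) x - K (xs i) x))\<^sup>2)"])
    fix i :: nat
    show "(\<lambda>d. ennreal ((a - \<beta> i * (rff (fst (snd d)) (snd (snd d)) (xs i) * rff (fst (snd d)) (snd (snd d)) x - K (xs i) x))\<^sup>2)) \<in> borel_measurable (?pm \<Otimes>\<^sub>M (P \<Otimes>\<^sub>M U))"
      unfolding rff_def using P(2) by measurable
  next
    show "fst \<in> ?pm \<Otimes>\<^sub>M (P \<Otimes>\<^sub>M U) \<rightarrow>\<^sub>M count_space UNIV"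
      using measurable_fst[of ?pm "P \<Otimes>\<^sub>M U"] by simp
  qed
  have "(\<integral>\<^sup>+ d. ?F d \<partial>(draw_measure N P)) = (\<integral>\<^sup>+ i. \<integral>\<^sup>+ w. ?F (i, w) \<partial>(P \<Otimes>\<^sub>M U) \<partial>?pm)"
    unfolding draw_measure_def using Q.nn_integral_fst[OF Fm] by simp
  also have "\<dots> \<le> (\<integral>\<^sup>+ i. ennreal (a\<^sup>2 + C * min 4 (2 * \<kappa>)) \<partial>?pm)"
  proof (rule nn_integral_mono)
    fix i
    have "(\<integral>\<^sup>+ w. ?F (i, w) \<partial>(P \<Otimes>\<^sub>M U)) \<le> ennreal (a\<^sup>2 + (\<beta> i)\<^sup>2 * min 4 (2 * \<kappa>))"
      using inner_step[OF P Ks kap, of a "\<beta> i" "xs i" x] by simp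
    also have "\<dots> \<le> ennreal (a\<^sup>2 + C * min 4 (2 * \<kappa>))"
      by (intro ennreal_leI add_left_mono mult_right_mono \<beta> B)
    finally show "(\<integral>\<^sup>+ w. ?F (i, w) \<partial>(P \<Otimes>\<^sub>M U)) \<le> ennreal (a\<^sup>2 + C * min 4 (2 * \<kappa>))" .
  qed
  also have "\<dots> = ennreal (a\<^sup>2 + C * min 4 (2 * \<kappa>))"
    by (simp add: measure_pmf.emeasure_space_1)
  finally show ?thesis .
qed



lemma one_step:
  assumes P: "prob_space P" "sets P = sets borel"
    and Ks: "\<And>y z. K y z = (\<integral>\<omega>. (\<integral>b. rff \<omega> b y * rff \<omega> b z \<partial>U) \<partial>P)"
    and kap: "\<And>y. K y y \<le> \<kappa>"
    and Ldc: "\<And>y. continuous_on UNIV (\<lambda>u. Ld u y)"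
    and LdM: "\<And>u y. \<bar>Ld u y\<bar> \<le> M"
    and B: "0 \<le> min 4 (2 * \<kappa>)" and g0: "0 \<le> \<gamma>"
  shows "(\<integral>\<^sup>+ s. ennreal (\<bar>f_iter Ld xs ys \<gamma> lam s (Suc t) x - h_iter Ld K xs ys \<gamma> lam s (Suc t) x\<bar>\<^sup>2)
            \<partial>(PiM {..<Suc t} (\<lambda>_. draw_measure N P)))
    \<le> ennreal ((1 - \<gamma> * lam)\<^sup>2) * (\<integral>\<^sup>+ s. ennreal (\<bar>f_iter Ld xs ys \<gamma> lam s t x - h_iter Ld K xs ys \<gamma> lam s t x\<bar>\<^sup>2)
            \<partial>(PiM {..<t} (\<lambda>_. draw_measure N P))) + ennreal (\<gamma>\<^sup>2 * M\<^sup>2 * min 4 (2 * \<kappa>))"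
proof -
  let ?D = "draw_measure N P"
  let ?G = "\<lambda>s t. f_iter Ld xs ys \<gamma> lam s t x - h_iter Ld K xs ys \<gamma> lam s t x"
  interpret PS: product_sigma_finite "\<lambda>_. ?D"
    by (intro product_sigma_finite.intro prob_space_imp_sigma_finite prob_D P(1))
  interpret PP: prob_space "PiM {..<t} (\<lambda>_. ?D)"
    by (intro prob_space_PiM prob_D P(1))
  have m: "(\<lambda>s. f_iter Ld xs ys \<gamma> lam s T z) \<in> borel_measurable (PiM {..<T'} (\<lambda>_. ?D))"
    "(\<lambda>s. h_iter Ld K xs ys \<gamma> lam s T z) \<in> borel_measurable (PiM {..<T'} (\<lambda>_. ?D))"
    if "T \<le> T'" for T T' z
    using meas_iter[OF P(2) Ldc that] by auto
  have mS: "(\<lambda>s. ennreal (\<bar>?G s (Suc t)\<bar>\<^sup>2)) \<in> borel_measurable (PiM (insert t {..<t}) (\<lambda>_. ?D))"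
    using m[of "Suc t" "Suc t"] unfolding lessThan_Suc[symmetric] by measurable
  have mT: "(\<lambda>s. ?G s t) \<in> borel_measurable (PiM {..<t} (\<lambda>_. ?D))"
    using m[of t t] by measurable
  have "(\<integral>\<^sup>+ s. ennreal (\<bar>?G s (Suc t)\<bar>\<^sup>2) \<partial>(PiM {..<Suc t} (\<lambda>_. ?D)))
      = (\<integral>\<^sup>+ s. (\<integral>\<^sup>+ d. ennreal (\<bar>?G (s(t:=d)) (Suc t)\<bar>\<^sup>2) \<partial>?D) \<partial>(PiM {..<t} (\<lambda>_. ?D)))"
    unfolding lessThan_Suc by (rule PS.product_nn_integral_insert[OF _ _ mS]) auto
  also have "\<dots> \<le> (\<integral>\<^sup>+ s. ennreal (((1 - \<gamma> * lam) * ?G s t)\<^sup>2 + \<gamma>\<^sup>2 * M\<^sup>2 * min 4 (2 * \<kappa>)) \<partial>(PiM {..<t} (\<lambda>_. ?D)))"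
  proof (rule nn_integral_mono)
    fix s
    let ?\<beta> = "\<lambda>i. \<gamma> * Ld (f_iter Ld xs ys \<gamma> lam s t (xs i)) (ys i)"
    have "(\<integral>\<^sup>+ d. ennreal (\<bar>?G (s(t:=d)) (Suc t)\<bar>\<^sup>2) \<partial>?D)
       = (\<integral>\<^sup>+ d. ennreal (((1 - \<gamma> * lam) * ?G s t - ?\<beta> (fst d) * (rff (fst (snd d)) (snd (snd d)) (xs (fst d)) * rff (fst (snd d)) (snd (snd d)) x - K (xs (fst d)) x))\<^sup>2) \<partial>?D)"
    proof (rule nn_integral_cong)
      fix d :: "nat \<times> 'a \<times> real"
      obtain i \<omega> b where d: "d = (i, \<omega>, b)" by (cases d) auto
      show "ennreal (\<bar>?G (s(t:=d)) (Suc t)\<bar>\<^sup>2) = ennreal (((1 - \<gamma> * lam) * ?G s t - ?\<beta> (fst d) * (rff (fst (snd d)) (snd (snd d)) (xs (fst d)) * rff (fst (snd d)) (snd (snd d)) x - K (xs (fst d)) x))\<^sup>2)"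
        unfolding d power2_abs using step_identity[of Ld xs ys \<gamma> lam s t i \<omega> b x K] by simp
    qed
    also have "\<dots> \<le> ennreal (((1 - \<gamma> * lam) * ?G s t)\<^sup>2 + (\<gamma>\<^sup>2 * M\<^sup>2) * min 4 (2 * \<kappa>))"
    proof (rule inner_D[OF P Ks kap _ B])
      fix i
      have "\<bar>?\<beta> i\<bar> \<le> \<gamma> * M"
        unfolding abs_mult using g0 by (simp add: mult_left_mono LdM)
      then have "\<bar>?\<beta> i\<bar>\<^sup>2 \<le> (\<gamma> * M)\<^sup>2" by (intro power_mono) auto
      then show "(?\<beta> i)\<^sup>2 \<le> \<gamma>\<^sup>2 * M\<^sup>2"
        by (simp only: power2_abs power_mult_distrib)
    qed
    finally show "(\<integral>\<^sup>+ d. ennreal (\<bar>?G (s(t:=d)) (Suc t)\<bar>\<^sup>2) \<partial>?D) \<le> ennreal (((1 - \<gamma> * lam) * ?G s t)\<^sup>2 + \<gamma>\<^sup>2 * M\<^sup>2 * min 4 (2 * \<kappa>))" .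
  qed
  also have "\<dots> = (\<integral>\<^sup>+ s. ennreal ((1 - \<gamma> * lam)\<^sup>2) * ennreal (\<bar>?G s t\<bar>\<^sup>2) + ennreal (\<gamma>\<^sup>2 * M\<^sup>2 * min 4 (2 * \<kappa>)) \<partial>(PiM {..<t} (\<lambda>_. ?D)))"
  proof (intro nn_integral_cong)
    fix s
    have E: "0 \<le> \<gamma>\<^sup>2 * M\<^sup>2 * min 4 (2 * \<kappa>)" using B by simp
    have "ennreal (((1 - \<gamma> * lam) * ?G s t)\<^sup>2 + \<gamma>\<^sup>2 * M\<^sup>2 * min 4 (2 * \<kappa>))
       = ennreal ((1 - \<gamma> * lam)\<^sup>2 * \<bar>?G s t\<bar>\<^sup>2) + ennreal (\<gamma>\<^sup>2 * M\<^sup>2 * min 4 (2 * \<kappa>))"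
      unfolding power_mult_distrib power2_abs by (rule ennreal_plus[OF _ E]) simp
    also have "\<dots> = ennreal ((1 - \<gamma> * lam)\<^sup>2) * ennreal (\<bar>?G s t\<bar>\<^sup>2) + ennreal (\<gamma>\<^sup>2 * M\<^sup>2 * min 4 (2 * \<kappa>))"
      by (subst ennreal_mult) auto
    finally show "ennreal (((1 - \<gamma> * lam) * ?G s t)\<^sup>2 + \<gamma>\<^sup>2 * M\<^sup>2 * min 4 (2 * \<kappa>))
       = ennreal ((1 - \<gamma> * lam)\<^sup>2) * ennreal (\<bar>?G s t\<bar>\<^sup>2) + ennreal (\<gamma>\<^sup>2 * M\<^sup>2 * min 4 (2 * \<kappa>))" .
  qed
  also have "\<dots> = ennreal ((1 - \<gamma> * lam)\<^sup>2) * (\<integral>\<^sup>+ s. ennreal (\<bar>?G s t\<bar>\<^sup>2) \<partial>(PiM {..<t} (\<lambda>_. ?D))) + ennreal (\<gamma>\<^sup>2 * M\<^sup>2 * min 4 (2 * \<kappa>))"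
    using mT by (subst nn_integral_add) (auto simp: nn_integral_cmult PP.emeasure_space_1)
  finally show ?thesis .
qed



theorem lemma3:
  fixes N :: nat and xs :: "nat \<Rightarrow> 'a::euclidean_space" and ys :: "nat \<Rightarrow> real"
    and K :: "'a \<Rightarrow> 'a \<Rightarrow> real" and P :: "'a measure"
    and L Ld :: "real \<Rightarrow> real \<Rightarrow> real"
    and lam \<gamma> M Lc \<kappa> \<phi> :: real
  assumes N: "N \<ge> 1"
    and K_cont: "continuous_on UNIV (\<lambda>(x, x'). K x x')"
    and K_sym: "\<And>x x'. K x x' = K x' x"
    and K_shift: "\<exists>k. \<forall>x x'. K x x' = k (x - x')"
    and K_pd: "\<And>(n::nat) c (z::nat \<Rightarrow> 'a). (\<Sum>i<n. \<Sum>j<n. c i * c j * K (z i) (z j)) \<ge> 0"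
    and P_prob: "prob_space P" and P_sets: "sets P = sets borel"
    and K_spectral: "\<And>x x'. K x x' =
          (\<integral>\<omega>. (\<integral>b. rff \<omega> b x * rff \<omega> b x' \<partial>uniform_measure lborel {0..2*pi}) \<partial>P)"
    and lam: "lam > 0"
    and L_convex: "\<And>y. convex_on UNIV (\<lambda>u. L u y)"
    and L_deriv: "\<And>u y. ((\<lambda>v. L v y) has_real_derivative Ld u y) (at u)"
    and Ld_bound: "\<And>u y. \<bar>Ld u y\<bar> < M"
    and L_lip: "\<And>y. Lc-lipschitz_on UNIV (\<lambda>u. L u y)"
    and Ld_lip: "\<And>y. Lc-lipschitz_on UNIV (\<lambda>u. Ld u y)"
    and K_bound: "\<And>x x'. K x x' \<le> \<kappa>"
    and phi_bound: "\<And>(\<omega>::'a) b x x'. \<bar>rff \<omega> b x * rff \<omega> b x'\<bar> \<le> \<phi>"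
    and gam: "0 < \<gamma>" "\<gamma> < 1 / lam"
  shows "(\<integral>\<^sup>+ s. ennreal (\<bar>f_iter Ld xs ys \<gamma> lam s t x - h_iter Ld K xs ys \<gamma> lam s t x\<bar>\<^sup>2)
            \<partial>(PiM {..<t} (\<lambda>_. draw_measure N P)))
         \<le> ennreal (M\<^sup>2 * (sqrt \<kappa> + sqrt \<phi>)\<^sup>2 * \<gamma> / lam)"
proof -
  let ?D = "draw_measure N P"
  let ?A = "\<lambda>t. (\<integral>\<^sup>+ s. ennreal (\<bar>f_iter Ld xs ys \<gamma> lam s t x - h_iter Ld K xs ys \<gamma> lam s t x\<bar>\<^sup>2)
            \<partial>(PiM {..<t} (\<lambda>_. ?D)))"
  define B where "B = min 4 (2 * \<kappa>)"
  define c where "c = 1 - \<gamma> * lam"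
  have Ldc: "\<And>y. continuous_on UNIV (\<lambda>u. Ld u y)"
    using Ld_lip by (rule lipschitz_on_continuous_on)
  have LdM: "\<And>u y. \<bar>Ld u y\<bar> \<le> M" using Ld_bound less_imp_le by blast
  have M0: "0 \<le> M" using LdM[of 0 0] by simp
  have Kxx: "0 \<le> K y y" for y
    using K_pd[where n=1 and c="\<lambda>_. 1" and z="\<lambda>_. y"] by simp
  have kap0: "0 \<le> \<kappa>" using Kxx[of x] K_bound[of x x] by simp
  have B0: "0 \<le> B" unfolding B_def using kap0 by simp
  have phi2: "2 \<le> \<phi>" using phi_bound[of 0 0 0 0] by (simp add: rff_def)
  have gl: "\<gamma> * lam < 1" using gam lam by (simp add: field_simps)
  have c0: "0 < c" "c < 1" unfolding c_def using gl gam lam by auto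
  have d0: "0 < 1 - c\<^sup>2" using c0 by (simp add: power2_eq_square) (smt (verit) mult_less_cancel_right2)
  define E where "E = \<gamma>\<^sup>2 * M\<^sup>2 * B"
  have E0: "0 \<le> E" unfolding E_def using B0 by simp
  define R where "R = E / (1 - c\<^sup>2)"
  have R0: "0 \<le> R" unfolding R_def using E0 d0 by simp
  have Rfix: "c\<^sup>2 * R + E = R" unfolding R_def using d0 by (simp add: field_simps)
  have AR: "?A t \<le> ennreal R" for t
  proof (induction t)
    case 0
    then show ?case by simp
  next
    case (Suc t)
    have "?A (Suc t) \<le> ennreal (c\<^sup>2) * ?A t + ennreal E"
      unfolding c_def E_def B_def
      by (rule one_step[OF P_prob P_sets K_spectral K_bound Ldc LdM]) (use B0 gam in \<open>auto simp: B_def\<close>)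
    also have "\<dots> \<le> ennreal (c\<^sup>2) * ennreal R + ennreal E"
      by (intro add_right_mono mult_left_mono Suc.IH) auto
    also have "\<dots> = ennreal (c\<^sup>2 * R + E)"
      using R0 E0 by (simp add: ennreal_plus ennreal_mult)
    finally show ?case unfolding Rfix .
  qed
  have "R \<le> M\<^sup>2 * (sqrt \<kappa> + sqrt \<phi>)\<^sup>2 * \<gamma> / lam"
  proof -
    have one: "1 - c\<^sup>2 = \<gamma> * lam * (2 - \<gamma> * lam)" unfolding c_def by (simp add: power2_eq_square algebra_simps)
    have gl0: "0 < \<gamma> * lam" using gam lam by simp
    have "\<gamma> * lam * 1 \<le> \<gamma> * lam * (2 - \<gamma> * lam)"
      by (rule mult_left_mono) (use gl gl0 in auto)
    then have "\<gamma> * lam \<le> 1 - c\<^sup>2" unfolding one by simp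
    have Bs: "B \<le> (sqrt \<kappa> + sqrt \<phi>)\<^sup>2"
    proof -
      have "(sqrt \<kappa> + sqrt \<phi>)\<^sup>2 = \<kappa> + \<phi> + 2 * sqrt \<kappa> * sqrt \<phi>"
        using kap0 phi2 by (simp add: power2_eq_square algebra_simps)
      moreover have "0 \<le> sqrt \<kappa> * sqrt \<phi>" using kap0 phi2 by simp
      ultimately show ?thesis unfolding B_def using phi2 by linarith
    qed
    have "R = \<gamma>\<^sup>2 * M\<^sup>2 * B / (1 - c\<^sup>2)" unfolding R_def E_def ..
    also have "\<dots> \<le> \<gamma>\<^sup>2 * M\<^sup>2 * B / (\<gamma> * lam)"
      using \<open>\<gamma> * lam \<le> 1 - c\<^sup>2\<close> B0 mult_pos_pos[OF d0 gl0] by (intro divide_left_mono) auto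
    also have "\<dots> = M\<^sup>2 * B * \<gamma> / lam" using gam by (simp add: power2_eq_square field_simps)
    also have "\<dots> \<le> M\<^sup>2 * (sqrt \<kappa> + sqrt \<phi>)\<^sup>2 * \<gamma> / lam"
      by (intro divide_right_mono mult_right_mono mult_left_mono Bs) (use gam lam in auto)
    finally show ?thesis .
  qed
  then show ?thesis using AR[of t] by (meson ennreal_leI order_trans)
qed

end
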